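(* Let $G$ be a locally compact group, $G_e$ the connected component of its identity and $q_e:G\to G/G_e$ the quotient map. Let $(\eta_{td},G^{td})$ be the totally disconnected compactification of $G$ and $(\tilde{\eta}_{td},(G/G_e)^{td})$ the totally disconnected compactification of $G/G_e$. Then there is an isomorphism of topological groups $\theta:G^{td}\to(G/G_e)^{td}$ with $\theta\circ\eta_{td}=\tilde{\eta}_{td}\circ q_e$; that is, the compactifications $(\eta_{td},G^{td})$ and $(\tilde{\eta}_{td}\circ q_e,(G/G_e)^{td})$ of $G$ coincide. In particular $G^{td}\cong(G/G_e)^{td}$.
   Context: For a locally compact group $G$, let $(\eta_{ap},G^{ap})$ be its maximal almost periodic (Bohr) compactification: $G^{ap}$ is a compact group and $\eta_{ap}:G\to G^{ap}$ a continuous homomorphism with dense range, universal among such group compactifications. Let $(G^{ap})_e$ be the connected component of the identity in $G^{ap}$ and $q^{ap}_e:G^{ap}\to G^{ap}/(G^{ap})_e$ the quotient map. The totally disconnected compactification of $G$ is $(\eta_{td},G^{td})$ where $G^{td}=G^{ap}/(G^{ap})_e$ and $\eta_{td}=q^{ap}_e\circ\eta_{ap}$. *)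

theory Defs
  imports "HOL-Analysis.Analysis" "HOL-Algebra.Algebra"
begin

definition topological_group :: "('a, 'm) monoid_scheme \<Rightarrow> 'a topology \<Rightarrow> bool" where
  "topological_group G T \<longleftrightarrow>
     group G \<and> topspace T = carrier G \<and>
     continuous_map (prod_topology T T) T (\<lambda>(x, y). x \<otimes>\<^bsub>G\<^esub> y) \<and>
     continuous_map T T (\<lambda>x. inv\<^bsub>G\<^esub> x)"

definition compact_group :: "('a, 'm) monoid_scheme \<Rightarrow> 'a topology \<Rightarrow> bool" where
  "compact_group G T \<longleftrightarrow> topological_group G T \<and> Hausdorff_space T \<and> compact_space T"

definition locally_compact_group :: "('a, 'm) monoid_scheme \<Rightarrow> 'a topology \<Rightarrow> bool" where
  "locally_compact_group G T \<longleftrightarrow>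
     topological_group G T \<and> Hausdorff_space T \<and> locally_compact_space T"

definition cont_hom ::
  "('a, 'm) monoid_scheme \<Rightarrow> 'a topology \<Rightarrow> ('b, 'n) monoid_scheme \<Rightarrow> 'b topology \<Rightarrow> ('a \<Rightarrow> 'b) \<Rightarrow> bool" where
  "cont_hom G T H S h \<longleftrightarrow> h \<in> hom G H \<and> continuous_map T S h"

definition top_group_iso ::
  "('a, 'm) monoid_scheme \<Rightarrow> 'a topology \<Rightarrow> ('b, 'n) monoid_scheme \<Rightarrow> 'b topology \<Rightarrow> ('a \<Rightarrow> 'b) \<Rightarrow> bool" where
  "top_group_iso G T H S h \<longleftrightarrow> h \<in> iso G H \<and> homeomorphic_map T S h"

definition group_compactification ::
  "('a, 'm) monoid_scheme \<Rightarrow> 'a topology \<Rightarrow> ('a \<Rightarrow> 'b) \<Rightarrow> ('b, 'n) monoid_scheme \<Rightarrow> 'b topology \<Rightarrow> bool" where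
  "group_compactification G T h K S \<longleftrightarrow>
     compact_group K S \<and> cont_hom G T K S h \<and> S closure_of (h ` carrier G) = topspace S"

text \<open>Test compactifications are
  taken with carrier a subset of the type \<open>'a set set\<close>, where \<open>'a\<close> is the element
  type of \<open>G\<close>: every group compactification \<open>(L,\<alpha>)\<close> of \<open>G\<close> has cardinality at most
  \<open>2^(2^|G|)\<close> (a Hausdorff space with a dense subset of size \<open>\<kappa>\<close> has at most
  \<open>2^(2^\<kappa>)\<close> points), so it is isomorphic to one of these; hence this is
  universality among all group compactifications.\<close>
definition ap_compactification ::
  "('a, 'm) monoid_scheme \<Rightarrow> 'a topology \<Rightarrow> ('a \<Rightarrow> 'b) \<Rightarrow> ('b, 'n) monoid_scheme \<Rightarrow> 'b topology \<Rightarrow> bool" where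
  "ap_compactification G T \<eta> K S \<longleftrightarrow>
     group_compactification G T \<eta> K S \<and>
     (\<forall>(L :: 'a set set monoid) (R :: 'a set set topology) \<alpha>.
        group_compactification G T \<alpha> L R \<longrightarrow>
        (\<exists>\<phi>. cont_hom K S L R \<phi> \<and> (\<forall>x \<in> carrier G. \<phi> (\<eta> x) = \<alpha> x) \<and>
             (\<forall>\<psi>. cont_hom K S L R \<psi> \<and> (\<forall>x \<in> carrier G. \<psi> (\<eta> x) = \<alpha> x) \<longrightarrow>
                   (\<forall>y \<in> carrier K. \<psi> y = \<phi> y))))"

definition quotient_top :: "'a topology \<Rightarrow> 'a set set \<Rightarrow> 'a set topology" where
  "quotient_top T P = topology (\<lambda>U. U \<subseteq> P \<and> openin T (\<Union>U))"

definition identity_component :: "('a, 'm) monoid_scheme \<Rightarrow> 'a topology \<Rightarrow> 'a set" where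
  "identity_component G T = connected_component_of_set T \<one>\<^bsub>G\<^esub>"

definition comp_quot_group :: "('a, 'm) monoid_scheme \<Rightarrow> 'a topology \<Rightarrow> 'a set monoid" where
  "comp_quot_group G T = G Mod (identity_component G T)"

definition comp_quot_top :: "('a, 'm) monoid_scheme \<Rightarrow> 'a topology \<Rightarrow> 'a set topology" where
  "comp_quot_top G T = quotient_top T (rcosets\<^bsub>G\<^esub> (identity_component G T))"

definition comp_quot_map :: "('a, 'm) monoid_scheme \<Rightarrow> 'a topology \<Rightarrow> 'a \<Rightarrow> 'a set" where
  "comp_quot_map G T x = identity_component G T #>\<^bsub>G\<^esub> x"

end

theory Submission
  imports Defs
begin

section \<open>Pullback (quotient) topologies\<close>

definition ptop :: "'a topology \<Rightarrow> ('a \<Rightarrow> 'b) \<Rightarrow> 'b set \<Rightarrow> 'b topology" where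
  "ptop TX f YY = topology (\<lambda>V. V \<subseteq> YY \<and> openin TX {x \<in> topspace TX. f x \<in> V})"

lemma ptop_open:
  "openin (ptop TX f YY) V \<longleftrightarrow> V \<subseteq> YY \<and> openin TX {x \<in> topspace TX. f x \<in> V}"
proof -
  have "istopology (\<lambda>V. V \<subseteq> YY \<and> openin TX {x \<in> topspace TX. f x \<in> V})"
    unfolding istopology_def
  proof (rule conjI; intro allI impI)
    fix S T assume ST: "S \<subseteq> YY \<and> openin TX {x \<in> topspace TX. f x \<in> S}" "T \<subseteq> YY \<and> openin TX {x \<in> topspace TX. f x \<in> T}"
    then show "S \<inter> T \<subseteq> YY \<and> openin TX {x \<in> topspace TX. f x \<in> S \<inter> T}"
    proof -
      have "{x \<in> topspace TX. f x \<in> S \<inter> T} = {x \<in> topspace TX. f x \<in> S} \<inter> {x \<in> topspace TX. f x \<in> T}" by auto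
      then show ?thesis using ST openin_Int by auto
    qed
  next
    fix \<K> assume H: "\<forall>K\<in>\<K>. K \<subseteq> YY \<and> openin TX {x \<in> topspace TX. f x \<in> K}"
    have eq: "{x \<in> topspace TX. f x \<in> \<Union>\<K>} = \<Union>((\<lambda>K. {x \<in> topspace TX. f x \<in> K}) ` \<K>)" by auto
    show "\<Union>\<K> \<subseteq> YY \<and> openin TX {x \<in> topspace TX. f x \<in> \<Union>\<K>}"
      using H unfolding eq by (auto intro!: openin_Union)
  qed
  then show ?thesis unfolding ptop_def by simp
qed

lemma ptop_topspace:
  assumes "f ` topspace TX \<subseteq> YY" shows "topspace (ptop TX f YY) = YY"
proof -
  have "{x \<in> topspace TX. f x \<in> YY} = topspace TX" using assms by auto
  then have "openin (ptop TX f YY) YY" unfolding ptop_open by auto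
  then have "YY \<subseteq> topspace (ptop TX f YY)" by (simp add: openin_subset)
  moreover have "topspace (ptop TX f YY) \<subseteq> YY"
    using ptop_open[of TX f YY "topspace (ptop TX f YY)"] by simp
  ultimately show ?thesis by blast
qed

lemma ptop_quotient_map:
  assumes "f ` topspace TX = YY" shows "quotient_map TX (ptop TX f YY) f"
  unfolding quotient_map_def using assms
  by (simp add: ptop_topspace ptop_open)

lemma tg_group: "topological_group G T \<Longrightarrow> group G"
  and tg_top: "topological_group G T \<Longrightarrow> topspace T = carrier G"
  and tg_multc: "topological_group G T \<Longrightarrow> continuous_map (prod_topology T T) T (\<lambda>(x, y). x \<otimes>\<^bsub>G\<^esub> y)"
  and tg_invc: "topological_group G T \<Longrightarrow> continuous_map T T (\<lambda>x. inv\<^bsub>G\<^esub> x)"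
  by (simp_all add: topological_group_def)

lemma tg_mult_cont:
  assumes "topological_group G T" "continuous_map Z T f" "continuous_map Z T g"
  shows "continuous_map Z T (\<lambda>z. f z \<otimes>\<^bsub>G\<^esub> g z)"
proof -
  have "continuous_map Z T ((\<lambda>(x, y). x \<otimes>\<^bsub>G\<^esub> y) \<circ> (\<lambda>z. (f z, g z)))"
    by (rule continuous_map_compose[OF continuous_map_pairedI[OF assms(2,3)] tg_multc[OF assms(1)]])
  then show ?thesis by (simp add: o_def)
qed

lemma tg_inv_cont:
  assumes "topological_group G T" "continuous_map Z T f"
  shows "continuous_map Z T (\<lambda>z. inv\<^bsub>G\<^esub> (f z))"
proof -
  have "continuous_map Z T ((\<lambda>x. inv\<^bsub>G\<^esub> x) \<circ> f)"
    by (rule continuous_map_compose[OF assms(2) tg_invc[OF assms(1)]])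
  then show ?thesis by (simp add: o_def)
qed

lemma tg_const_cont:
  assumes "topological_group G T" "a \<in> carrier G"
  shows "continuous_map Z T (\<lambda>z. a)"
  using assms tg_top by auto

lemma comp_image:
  assumes "continuous_map T S f" "f a = b" "y \<in> connected_component_of_set T a"
  shows "f y \<in> connected_component_of_set S b"
  using connected_component_of_continuous_image[OF assms(1), of a y] assms(2,3) by simp

lemma idc_sub: "identity_component G T \<subseteq> topspace T"
  unfolding identity_component_def by (rule connected_component_of_subset_topspace)

lemma idc_one: "topological_group G T \<Longrightarrow> \<one>\<^bsub>G\<^esub> \<in> identity_component G T"
  unfolding identity_component_def
  by (simp add: connected_component_of_refl tg_top tg_group group.is_monoid monoid.one_closed)

lemma (in group) idc_normal:
  assumes tg: "topological_group G T"
  shows "identity_component G T \<lhd> G"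
proof -
  let ?H = "identity_component G T"
  have top: "topspace T = carrier G" by (rule tg_top[OF tg])
  have Hc: "?H \<subseteq> carrier G" using idc_sub[of G T] unfolding top .
  have one: "\<one> \<in> ?H" by (rule idc_one[OF tg])
  have idc_eq: "?H = connected_component_of_set T \<one>" by (simp add: identity_component_def)
  have kill: "f y \<in> ?H" if "continuous_map T T f" "f \<one> = \<one>" "y \<in> ?H" for f y
  proof -
    have "f y \<in> connected_component_of_set T \<one>"
      using comp_image[OF that(1,2), of y] that(3) unfolding idc_eq .
    then show ?thesis unfolding idc_eq .
  qed
  have idcont: "continuous_map T T (\<lambda>z. z)" by (rule continuous_map_id[unfolded id_def])
  have sub: "subgroup ?H G"
  proof (rule subgroupI)
    show "?H \<subseteq> carrier G" by (rule Hc)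
    show "?H \<noteq> {}" using one by blast
  next
    fix a assume a: "a \<in> ?H"
    have c: "continuous_map T T (\<lambda>z. inv z)" using tg_inv_cont[OF tg idcont] .
    have "inv \<one> = \<one>" by (rule inv_one)
    from kill[OF c this a] show "inv a \<in> ?H" .
  next
    fix a b assume ab: "a \<in> ?H" "b \<in> ?H"
    have ac: "a \<in> carrier G" using ab Hc by blast
    have cm: "continuous_map T T (\<lambda>z. a \<otimes> z)"
      using tg_mult_cont[OF tg tg_const_cont[OF tg ac] idcont] .
    have "a \<otimes> \<one> = a" using ac by (rule r_one)
    from comp_image[OF cm this, of b] ab(2)
    have "a \<otimes> b \<in> connected_component_of_set T a" unfolding idc_eq .
    then have 1: "connected_component_of T a (a \<otimes> b)" by simp
    have 2: "connected_component_of T \<one> a" using ab(1) unfolding idc_eq by simp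
    have "connected_component_of T \<one> (a \<otimes> b)" by (rule connected_component_of_trans[OF 2 1])
    then show "a \<otimes> b \<in> ?H" unfolding idc_eq by simp
  qed
  show ?thesis
    unfolding normal_inv_iff
  proof (intro conjI sub ballI)
    fix x h assume xh: "x \<in> carrier G" "h \<in> ?H"
    have cm: "continuous_map T T (\<lambda>z. x \<otimes> z \<otimes> inv x)"
    proof -
      have c1: "continuous_map T T (\<lambda>z. x)" by (rule tg_const_cont[OF tg xh(1)])
      have c2: "continuous_map T T (\<lambda>z. x \<otimes> z)" by (rule tg_mult_cont[OF tg c1 idcont])
      have c3: "continuous_map T T (\<lambda>z. inv x)" by (rule tg_const_cont[OF tg inv_closed[OF xh(1)]])
      show ?thesis by (rule tg_mult_cont[OF tg c2 c3])
    qed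
    have "x \<otimes> \<one> \<otimes> inv x = \<one>" using xh(1) by simp
    from kill[OF cm this xh(2)] show "x \<otimes> h \<otimes> inv x \<in> ?H" .
  qed
qed

lemma (in group) rcos_union:
  assumes "subgroup H G" "VV \<subseteq> rcosets H"
  shows "\<Union>VV = {x \<in> carrier G. H #> x \<in> VV}"
proof (rule equalityI; rule subsetI)
  fix x assume "x \<in> \<Union>VV"
  then obtain C where C: "C \<in> VV" "x \<in> C" by blast
  then obtain a where a: "a \<in> carrier G" "C = H #> a" using assms(2) unfolding RCOSETS_def by blast
  have xc: "x \<in> carrier G" using subgroup.elemrcos_carrier[OF assms(1) is_group a(1)] C a by blast
  have "H #> a = H #> x" using repr_independence[of x H a] C a assms(1) by blast
  then show "x \<in> {x \<in> carrier G. H #> x \<in> VV}" using xc C a by auto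
next
  fix x assume "x \<in> {x \<in> carrier G. H #> x \<in> VV}"
  then show "x \<in> \<Union>VV" using rcos_self[of x H] assms(1) by blast
qed

lemma quot_top_eq:
  assumes "group G" "subgroup H G" "topspace T = carrier G"
  shows "quotient_top T (rcosets\<^bsub>G\<^esub> H) = ptop T (\<lambda>x. H #>\<^bsub>G\<^esub> x) (rcosets\<^bsub>G\<^esub> H)"
proof -
  have "(\<lambda>U. U \<subseteq> rcosets\<^bsub>G\<^esub> H \<and> openin T (\<Union>U)) =
        (\<lambda>V. V \<subseteq> rcosets\<^bsub>G\<^esub> H \<and> openin T {x \<in> topspace T. H #>\<^bsub>G\<^esub> x \<in> V})"
  proof (rule ext)
    fix U show "(U \<subseteq> rcosets\<^bsub>G\<^esub> H \<and> openin T (\<Union>U)) =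
        (U \<subseteq> rcosets\<^bsub>G\<^esub> H \<and> openin T {x \<in> topspace T. H #>\<^bsub>G\<^esub> x \<in> U})"
      using group.rcos_union[OF assms(1,2), of U] assms(3) by auto
  qed
  then show ?thesis unfolding quotient_top_def ptop_def by simp
qed

lemma rcosets_image:
  assumes "group G" "subgroup H G"
  shows "(\<lambda>x. H #>\<^bsub>G\<^esub> x) ` carrier G = rcosets\<^bsub>G\<^esub> H"
  unfolding RCOSETS_def by auto

lemma quot_qmap:
  assumes "group G" "subgroup H G" "topspace T = carrier G"
  shows "quotient_map T (quotient_top T (rcosets\<^bsub>G\<^esub> H)) (\<lambda>x. H #>\<^bsub>G\<^esub> x)"
  unfolding quot_top_eq[OF assms]
  by (rule ptop_quotient_map) (simp add: assms rcosets_image)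

lemma quot_topspace:
  assumes "group G" "subgroup H G" "topspace T = carrier G"
  shows "topspace (quotient_top T (rcosets\<^bsub>G\<^esub> H)) = rcosets\<^bsub>G\<^esub> H"
  unfolding quot_top_eq[OF assms]
  by (rule ptop_topspace) (simp add: assms rcosets_image)


section \<open>The quotient by the identity component\<close>

context group
begin

lemma cq_map_eq: "comp_quot_map G T = (\<lambda>x. identity_component G T #> x)"
  by (simp add: comp_quot_map_def fun_eq_iff)

lemma cq_basic:
  assumes tg: "topological_group G T"
  shows "group (comp_quot_group G T)"
    and "carrier (comp_quot_group G T) = rcosets (identity_component G T)"
    and "topspace (comp_quot_top G T) = carrier (comp_quot_group G T)"
    and "quotient_map T (comp_quot_top G T) (comp_quot_map G T)"
    and "continuous_map T (comp_quot_top G T) (comp_quot_map G T)"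
    and "comp_quot_map G T \<in> hom G (comp_quot_group G T)"
    and "\<one>\<^bsub>comp_quot_group G T\<^esub> = identity_component G T"
    and "identity_component G T \<lhd> G"
    and "subgroup (identity_component G T) G"
proof -
  have N: "identity_component G T \<lhd> G" by (rule idc_normal[OF tg])
  then have S: "subgroup (identity_component G T) G" by (rule normal_imp_subgroup)
  have top: "topspace T = carrier G" by (rule tg_top[OF tg])
  show "group (comp_quot_group G T)" unfolding comp_quot_group_def
    by (rule normal.factorgroup_is_group[OF N])
  show C: "carrier (comp_quot_group G T) = rcosets (identity_component G T)"
    unfolding comp_quot_group_def by (simp add: FactGroup_def)
  show "topspace (comp_quot_top G T) = carrier (comp_quot_group G T)"
    unfolding C comp_quot_top_def by (rule quot_topspace[OF is_group S top])
  show Q: "quotient_map T (comp_quot_top G T) (comp_quot_map G T)"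
    unfolding comp_quot_top_def cq_map_eq by (rule quot_qmap[OF is_group S top])
  show "continuous_map T (comp_quot_top G T) (comp_quot_map G T)"
    by (rule quotient_imp_continuous_map[OF Q])
  show "comp_quot_map G T \<in> hom G (comp_quot_group G T)"
    unfolding comp_quot_group_def cq_map_eq by (rule normal.r_coset_hom_Mod[OF N])
  show "\<one>\<^bsub>comp_quot_group G T\<^esub> = identity_component G T"
    unfolding comp_quot_group_def by simp
  show "identity_component G T \<lhd> G" by (rule N)
  show "subgroup (identity_component G T) G" by (rule S)
qed

lemma rcos_fiber:
  assumes "subgroup H G" "a \<in> carrier G"
  shows "{x \<in> carrier G. H #> x = H #> a} = H #> a"
proof (rule equalityI; rule subsetI)
  fix x assume "x \<in> {x \<in> carrier G. H #> x = H #> a}"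
  then show "x \<in> H #> a" using repr_independenceD[OF assms(1), of x a] by auto
next
  fix x assume x: "x \<in> H #> a"
  have xc: "x \<in> carrier G" using subgroup.elemrcos_carrier[OF assms(1) is_group assms(2) x] .
  have "H #> a = H #> x" by (rule repr_independence[OF x assms(2,1)])
  then show "x \<in> {x \<in> carrier G. H #> x = H #> a}" using xc by simp
qed

lemma rcos_image: "H #> a = (\<lambda>z. z \<otimes> a) ` H"
  unfolding r_coset_def by auto

lemma cq_kill:
  assumes tg: "topological_group G T"
    and f: "continuous_map Z (comp_quot_top G T) f"
    and f0: "f z0 = identity_component G T"
    and z: "z \<in> connected_component_of_set Z z0"
  shows "f z = identity_component G T"
proof -
  let ?H = "identity_component G T"
  let ?Q = "comp_quot_top G T"
  let ?q = "comp_quot_map G T"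
  let ?C = "connected_component_of_set ?Q ?H"
  have top: "topspace T = carrier G" by (rule tg_top[OF tg])
  have S: "subgroup ?H G" by (rule cq_basic(9)[OF tg])
  have Hc: "?H \<subseteq> carrier G" by (rule subgroup.subset[OF S])
  have topQ: "topspace ?Q = rcosets ?H" using cq_basic(2,3)[OF tg] by simp
  have qm: "quotient_map T ?Q ?q" by (rule cq_basic(4)[OF tg])
  have fz: "f z \<in> ?C" by (rule comp_image[OF f f0 z])
  have mono: "monotone_map T ?Q ?q"
    unfolding monotone_map_def
  proof (intro conjI ballI)
    show "?q ` topspace T \<subseteq> topspace ?Q" using qm by (simp add: quotient_map_def)
  next
    fix y assume "y \<in> topspace ?Q"
    then obtain a where a: "a \<in> carrier G" "y = ?H #> a" using topQ unfolding RCOSETS_def by auto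
    have eq: "{x \<in> topspace T. ?q x = y} = (\<lambda>z. z \<otimes> a) ` ?H"
      using rcos_fiber[OF S a(1)] a(2) top rcos_image[of ?H a] by (simp add: cq_map_eq)
    have cm: "continuous_map T T (\<lambda>z. z \<otimes> a)"
      by (rule tg_mult_cont[OF tg continuous_map_id[unfolded id_def] tg_const_cont[OF tg a(1)]])
    have "connectedin T ?H" unfolding identity_component_def by (rule connectedin_connected_component_of)
    then show "connectedin T {x \<in> topspace T. ?q x = y}"
      unfolding eq by (rule connectedin_continuous_map_image[OF cm])
  qed
  have Cc: "connectedin ?Q ?C" by (rule connectedin_connected_component_of)
  have P: "connectedin T {x \<in> topspace T. ?q x \<in> ?C}"
    by (rule connectedin_monotone_quotient_map_preimage[OF mono qm Cc])
      (simp add: closedin_connected_component_of)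
  have q1: "?q \<one> = ?H" using Hc by (simp add: cq_map_eq)
  have HQ: "?H \<in> topspace ?Q" using topQ subgroup.subgroup_in_rcosets[OF S is_group] by simp
  have "\<one> \<in> {x \<in> topspace T. ?q x \<in> ?C}"
    using q1 HQ top by (simp add: connected_component_of_refl)
  then have Psub: "{x \<in> topspace T. ?q x \<in> ?C} \<subseteq> connected_component_of_set T \<one>"
    by (rule connected_component_of_maximal[OF P])
  have "f z \<in> topspace ?Q" by (rule subsetD[OF connected_component_of_subset_topspace fz])
  then obtain a where a: "a \<in> carrier G" "f z = ?H #> a" using topQ unfolding RCOSETS_def by auto
  have "a \<in> {x \<in> topspace T. ?q x \<in> ?C}" using a fz top by (simp add: cq_map_eq)
  then have "a \<in> ?H" using Psub unfolding identity_component_def by blast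
  then show ?thesis using a coset_join2[OF a(1) S] by simp
qed


lemma cq_compact:
  assumes cg: "compact_group G T"
  shows "compact_group (comp_quot_group G T) (comp_quot_top G T)"
proof -
  have tg: "topological_group G T" and Haus: "Hausdorff_space T" and cpt: "compact_space T"
    using cg by (auto simp: compact_group_def)
  let ?H = "identity_component G T"
  let ?M = "comp_quot_group G T"
  let ?Q = "comp_quot_top G T"
  let ?q = "comp_quot_map G T"
  have top: "topspace T = carrier G" by (rule tg_top[OF tg])
  have gM: "group ?M" by (rule cq_basic(1)[OF tg])
  have topQ: "topspace ?Q = carrier ?M" by (rule cq_basic(3)[OF tg])
  have qm: "quotient_map T ?Q ?q" by (rule cq_basic(4)[OF tg])
  have qc: "continuous_map T ?Q ?q" by (rule cq_basic(5)[OF tg])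
  have qh: "?q \<in> hom G ?M" by (rule cq_basic(6)[OF tg])
  have S: "subgroup ?H G" by (rule cq_basic(9)[OF tg])
  have gh: "group_hom G ?M ?q"
    unfolding group_hom_def group_hom_axioms_def using is_group gM qh by blast
  have qsurj: "?q ` topspace T = topspace ?Q" using qm by (simp add: quotient_map_def)
  have cptQ: "compact_space ?Q"
    using image_compactin[OF cpt[unfolded compact_space_def] qc] qsurj
    by (simp add: compact_space_def)
  have cm: "closed_map T ?Q ?q"
    unfolding closed_map_def
  proof (intro allI impI)
    fix U assume U: "closedin T U"
    have Uc: "U \<subseteq> carrier G" using closedin_subset[OF U] top by simp
    have eq: "{x. x \<in> topspace T \<and> ?q x \<in> ?q ` U} = (\<lambda>(h, u). h \<otimes> u) ` (?H \<times> U)"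
    proof (rule equalityI; rule subsetI)
      fix x assume "x \<in> {x. x \<in> topspace T \<and> ?q x \<in> ?q ` U}"
      then obtain u where xu: "x \<in> carrier G" "u \<in> U" "?H #> x = ?H #> u"
        using top by (auto simp: cq_map_eq)
      have "x \<in> ?H #> u" using rcos_fiber[OF S, of u] xu Uc by blast
      then obtain h where "h \<in> ?H" "x = h \<otimes> u" unfolding r_coset_def by blast
      then show "x \<in> (\<lambda>(h, u). h \<otimes> u) ` (?H \<times> U)" using xu(2) by force
    next
      fix x assume "x \<in> (\<lambda>(h, u). h \<otimes> u) ` (?H \<times> U)"
      then obtain h u where hu: "h \<in> ?H" "u \<in> U" "x = h \<otimes> u" by auto
      have uc: "u \<in> carrier G" using hu Uc by blast
      have hc: "h \<in> carrier G" using hu subgroup.subset[OF S] by blast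
      have "x \<in> ?H #> u" using hu rcosI[OF hu(1) subgroup.subset[OF S] uc] by simp
      then have "?H #> u = ?H #> x" by (rule repr_independence[OF _ uc S])
      moreover have "x \<in> carrier G" using hu hc uc by simp
      ultimately show "x \<in> {x. x \<in> topspace T \<and> ?q x \<in> ?q ` U}"
        using hu top by (auto simp: cq_map_eq)
    qed
    have cH: "compactin T ?H"
      by (rule closedin_compact_space[OF cpt]) (simp add: identity_component_def closedin_connected_component_of)
    have cU: "compactin T U" by (rule closedin_compact_space[OF cpt U])
    have "compactin (prod_topology T T) (?H \<times> U)" using cH cU by (simp add: compactin_Times)
    then have "compactin T ((\<lambda>(h, u). h \<otimes> u) ` (?H \<times> U))"
      by (rule image_compactin[OF _ tg_multc[OF tg]])
    then have "closedin T {x. x \<in> topspace T \<and> ?q x \<in> ?q ` U}"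
      unfolding eq by (rule compactin_imp_closedin[OF Haus])
    moreover have "?q ` U \<subseteq> topspace ?Q" using qsurj closedin_subset[OF U] by blast
    ultimately show "closedin ?Q (?q ` U)" using qm unfolding quotient_map_closedin by blast
  qed
  have nT: "normal_space T" using cpt Haus by (simp add: compact_Hausdorff_or_regular_imp_normal_space)
  have HausQ: "Hausdorff_space ?Q"
    using normal_Hausdorff_space_closed_continuous_map_image[OF nT Haus cm qc qsurj] by simp
  define p where "p = (\<lambda>z. (?q (fst z), ?q (snd z)))"
  have pc: "continuous_map (prod_topology T T) (prod_topology ?Q ?Q) p"
    unfolding p_def
    by (intro continuous_map_pairedI continuous_map_compose[OF continuous_map_fst qc, unfolded o_def]
        continuous_map_compose[OF continuous_map_snd qc, unfolded o_def])
  have psurj: "p ` topspace (prod_topology T T) = topspace (prod_topology ?Q ?Q)"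
  proof -
    have "p z = map_prod ?q ?q z" for z by (cases z) (simp add: p_def)
    then have "p = map_prod ?q ?q" by (rule ext)
    then show ?thesis using map_prod_surj_on[OF qsurj qsurj] by simp
  qed
  have pq: "quotient_map (prod_topology T T) (prod_topology ?Q ?Q) p"
    by (rule T1_Spaces.continuous_imp_quotient_map[OF pc _ _ psurj])
      (simp_all add: compact_space_prod_topology cpt Hausdorff_space_prod_topology HausQ)
  have mc: "continuous_map (prod_topology ?Q ?Q) ?Q (\<lambda>z. fst z \<otimes>\<^bsub>?M\<^esub> snd z)"
  proof (rule continuous_compose_quotient_map[OF pq])
    have c1: "continuous_map (prod_topology T T) T (\<lambda>z. fst z \<otimes> snd z)"
      by (rule tg_mult_cont[OF tg continuous_map_fst continuous_map_snd])
    have "continuous_map (prod_topology T T) ?Q (\<lambda>z. ?q (fst z \<otimes> snd z))"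
      using continuous_map_compose[OF c1 qc] by (simp add: o_def)
    then show "continuous_map (prod_topology T T) ?Q ((\<lambda>z. fst z \<otimes>\<^bsub>?M\<^esub> snd z) \<circ> p)"
      by (rule continuous_map_eq) (auto simp: p_def top group_hom.hom_mult[OF gh])
  qed
  have ic: "continuous_map ?Q ?Q (\<lambda>x. inv\<^bsub>?M\<^esub> x)"
  proof (rule continuous_compose_quotient_map[OF qm])
    have c1: "continuous_map T T (\<lambda>z. inv z)"
      by (rule tg_inv_cont[OF tg continuous_map_id[unfolded id_def]])
    have "continuous_map T ?Q (\<lambda>z. ?q (inv z))"
      using continuous_map_compose[OF c1 qc] by (simp add: o_def)
    then show "continuous_map T ?Q ((\<lambda>x. inv\<^bsub>?M\<^esub> x) \<circ> ?q)"
      by (rule continuous_map_eq) (auto simp: top group_hom.hom_inv[OF gh])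
  qed
  have "(\<lambda>(x, y). x \<otimes>\<^bsub>?M\<^esub> y) = (\<lambda>z. fst z \<otimes>\<^bsub>?M\<^esub> snd z)" by (simp add: fun_eq_iff split_def)
  then show ?thesis
    unfolding compact_group_def topological_group_def
    using gM topQ mc ic HausQ cptQ by simp
qed

lemma cq_induced:
  assumes tg: "topological_group G T"
    and fh: "cont_hom G T M S f" and gM: "group M"
    and kill: "\<forall>h \<in> identity_component G T. f h = \<one>\<^bsub>M\<^esub>"
  shows "cont_hom (comp_quot_group G T) (comp_quot_top G T) M S (\<lambda>C. f (SOME y. y \<in> C))"
    and "\<forall>x \<in> carrier G. f (SOME y. y \<in> comp_quot_map G T x) = f x"
proof -
  let ?H = "identity_component G T"
  let ?M = "comp_quot_group G T"
  let ?Q = "comp_quot_top G T"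
  let ?q = "comp_quot_map G T"
  let ?f = "\<lambda>C. f (SOME y. y \<in> C)"
  have top: "topspace T = carrier G" by (rule tg_top[OF tg])
  have qm: "quotient_map T ?Q ?q" by (rule cq_basic(4)[OF tg])
  have qh: "?q \<in> hom G ?M" by (rule cq_basic(6)[OF tg])
  have S: "subgroup ?H G" by (rule cq_basic(9)[OF tg])
  have fhom: "f \<in> hom G M" using fh unfolding cont_hom_def by (rule conjunct1)
  have fc: "continuous_map T S f" using fh unfolding cont_hom_def by (rule conjunct2)
  have eq: "?f (?q x) = f x" if x: "x \<in> carrier G" for x
  proof -
    have ex: "\<exists>y. y \<in> ?H #> x" using rcos_self[OF x S] by blast
    have "(SOME y. y \<in> ?H #> x) \<in> ?H #> x" using someI_ex[OF ex] .
    then obtain h where h: "h \<in> ?H" "(SOME y. y \<in> ?H #> x) = h \<otimes> x" unfolding r_coset_def by blast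
    have hc: "h \<in> carrier G" using h subgroup.subset[OF S] by blast
    have "f (h \<otimes> x) = f h \<otimes>\<^bsub>M\<^esub> f x" by (rule hom_mult[OF fhom hc x])
    also have "\<dots> = f x"
    proof -
      have "f h = \<one>\<^bsub>M\<^esub>" using kill h(1) by blast
      then show ?thesis using monoid.l_one[OF group.is_monoid[OF gM] hom_in_carrier[OF fhom x]] by simp
    qed
    finally show ?thesis using h(2) by (simp add: cq_map_eq)
  qed
  show "\<forall>x \<in> carrier G. f (SOME y. y \<in> ?q x) = f x" using eq by blast
  have carr: "carrier ?M = ?q ` carrier G"
    using cq_basic(2)[OF tg] rcosets_image[OF is_group S] by (simp add: cq_map_eq)
  have hom: "?f \<in> hom ?M M"
  proof (rule homI)
    fix C assume "C \<in> carrier ?M"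
    then have "C \<in> ?q ` carrier G" unfolding carr .
    then obtain x where x: "C = ?q x" "x \<in> carrier G" by (rule imageE)
    have "?f C = f x" unfolding x(1) by (rule eq[OF x(2)])
    then show "?f C \<in> carrier M" using hom_in_carrier[OF fhom x(2)] by simp
  next
    fix C D assume "C \<in> carrier ?M" "D \<in> carrier ?M"
    then have "C \<in> ?q ` carrier G" "D \<in> ?q ` carrier G" unfolding carr .
    then obtain x y where xy: "C = ?q x" "x \<in> carrier G" "D = ?q y" "y \<in> carrier G"
      by (auto elim!: imageE)
    have "C \<otimes>\<^bsub>?M\<^esub> D = ?q (x \<otimes> y)" unfolding xy(1,3) by (rule hom_mult[OF qh xy(2) xy(4), symmetric])
    moreover have "x \<otimes> y \<in> carrier G" using xy by simp
    ultimately have "?f (C \<otimes>\<^bsub>?M\<^esub> D) = f (x \<otimes> y)" using eq by simp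
    also have "\<dots> = f x \<otimes>\<^bsub>M\<^esub> f y" by (rule hom_mult[OF fhom xy(2) xy(4)])
    also have "\<dots> = ?f C \<otimes>\<^bsub>M\<^esub> ?f D" unfolding xy(1,3) using eq[OF xy(2)] eq[OF xy(4)] by simp
    finally show "?f (C \<otimes>\<^bsub>?M\<^esub> D) = ?f C \<otimes>\<^bsub>M\<^esub> ?f D" .
  qed
  have "continuous_map ?Q S ?f"
  proof (rule continuous_compose_quotient_map[OF qm])
    show "continuous_map T S (?f \<circ> ?q)"
      by (rule continuous_map_eq[OF fc]) (simp add: top eq)
  qed
  then show "cont_hom ?M ?Q M S ?f" using hom by (simp add: cont_hom_def)
qed

end


section \<open>Group compactifications: auxiliary facts\<close>

lemma cont_hom_comp:
  assumes f: "cont_hom A TA B TB f" and g: "cont_hom B TB C TC g"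
  shows "cont_hom A TA C TC (\<lambda>x. g (f x))"
proof -
  have fh: "f \<in> hom A B" using f unfolding cont_hom_def by (rule conjunct1)
  have fc: "continuous_map TA TB f" using f unfolding cont_hom_def by (rule conjunct2)
  have gh: "g \<in> hom B C" using g unfolding cont_hom_def by (rule conjunct1)
  have gc: "continuous_map TB TC g" using g unfolding cont_hom_def by (rule conjunct2)
  have "(\<lambda>x. g (f x)) \<in> hom A C"
  proof (rule homI)
    fix x assume "x \<in> carrier A"
    then show "g (f x) \<in> carrier C" by (intro hom_in_carrier[OF gh] hom_in_carrier[OF fh])
  next
    fix x y assume xy: "x \<in> carrier A" "y \<in> carrier A"
    have "f (x \<otimes>\<^bsub>A\<^esub> y) = f x \<otimes>\<^bsub>B\<^esub> f y" by (rule hom_mult[OF fh xy])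
    then show "g (f (x \<otimes>\<^bsub>A\<^esub> y)) = g (f x) \<otimes>\<^bsub>C\<^esub> g (f y)"
      using hom_mult[OF gh hom_in_carrier[OF fh xy(1)] hom_in_carrier[OF fh xy(2)]] by simp
  qed
  moreover have "continuous_map TA TC (\<lambda>x. g (f x))"
    using continuous_map_compose[OF fc gc] by (simp add: o_def)
  ultimately show ?thesis by (simp add: cont_hom_def)
qed

lemma gc_parts:
  assumes "group_compactification G T \<alpha> M S"
  shows "compact_group M S" and "cont_hom G T M S \<alpha>" and "S closure_of (\<alpha> ` carrier G) = topspace S"
    and "group M" and "topspace S = carrier M" and "Hausdorff_space S" and "topological_group M S"
    and "\<alpha> \<in> hom G M" and "continuous_map T S \<alpha>"
  using assms by (auto simp: group_compactification_def compact_group_def topological_group_def cont_hom_def)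

lemma code_inj:
  assumes gc: "group_compactification G T \<alpha> M S"
  shows "inj_on (\<lambda>m. {{g \<in> carrier G. \<alpha> g \<in> U} | U. openin S U \<and> m \<in> U}) (carrier M)"
proof (rule inj_onI, rule ccontr)
  fix m m' assume m: "m \<in> carrier M" "m' \<in> carrier M"
    and eq: "{{g \<in> carrier G. \<alpha> g \<in> U} | U. openin S U \<and> m \<in> U} = {{g \<in> carrier G. \<alpha> g \<in> U} | U. openin S U \<and> m' \<in> U}"
    and ne: "m \<noteq> m'"
  have top: "topspace S = carrier M" by (rule gc_parts(5)[OF gc])
  have H: "Hausdorff_space S" by (rule gc_parts(6)[OF gc])
  obtain U V where UV: "openin S U" "openin S V" "m \<in> U" "m' \<in> V" "disjnt U V"
    using H m ne top unfolding Hausdorff_space_def by metis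
  have "{g \<in> carrier G. \<alpha> g \<in> U} \<in> {{g \<in> carrier G. \<alpha> g \<in> U} | U. openin S U \<and> m \<in> U}"
    using UV by blast
  then have "{g \<in> carrier G. \<alpha> g \<in> U} \<in> {{g \<in> carrier G. \<alpha> g \<in> U} | U. openin S U \<and> m' \<in> U}"
    unfolding eq .
  then obtain W where W: "openin S W" "m' \<in> W" "{g \<in> carrier G. \<alpha> g \<in> U} = {g \<in> carrier G. \<alpha> g \<in> W}"
    by blast
  have "m' \<in> S closure_of (\<alpha> ` carrier G)" using gc_parts(3)[OF gc] top m by simp
  moreover have "m' \<in> W \<inter> V \<and> openin S (W \<inter> V)" using W UV by auto
  ultimately obtain y where y: "y \<in> \<alpha> ` carrier G" "y \<in> W \<inter> V" unfolding in_closure_of by blast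
  then obtain g where g: "g \<in> carrier G" "y = \<alpha> g" by blast
  then have "g \<in> {g \<in> carrier G. \<alpha> g \<in> W}" using y by simp
  then have "\<alpha> g \<in> U" using W(3) by blast
  then show False using UV(5) y g by (auto simp: disjnt_def)
qed


lemma gc_copy:
  fixes G :: "('a, 'm) monoid_scheme" and M :: "('x, 'n) monoid_scheme" and e :: "'x \<Rightarrow> 'y"
  assumes gc: "group_compactification G T \<alpha> M S" and inj: "inj_on e (carrier M)"
  shows "\<exists>(M2 :: 'y monoid) S2 e'. group_compactification G T (\<lambda>x. e (\<alpha> x)) M2 S2 \<and>
           cont_hom M2 S2 M S e' \<and> (\<forall>y \<in> carrier M. e' (e y) = y)"
proof -
  have cg: "compact_group M S" by (rule gc_parts(1)[OF gc])
  have gM: "group M" by (rule gc_parts(4)[OF gc])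
  have top: "topspace S = carrier M" by (rule gc_parts(5)[OF gc])
  have Haus: "Hausdorff_space S" by (rule gc_parts(6)[OF gc])
  have tg: "topological_group M S" by (rule gc_parts(7)[OF gc])
  have cpt: "compact_space S" using cg by (simp add: compact_group_def)
  define e' where "e' = inv_into (carrier M) e"
  define M2 :: "'y monoid" where
    "M2 = \<lparr>carrier = e ` carrier M, mult = (\<lambda>a b. e (e' a \<otimes>\<^bsub>M\<^esub> e' b)), one = e \<one>\<^bsub>M\<^esub>\<rparr>"
  define S2 where "S2 = ptop S e (e ` carrier M)"
  have ee: "e' (e y) = y" if "y \<in> carrier M" for y
    unfolding e'_def using inv_into_f_f[OF inj that] .
  have ee2: "e (e' a) = a" if "a \<in> e ` carrier M" for a
    unfolding e'_def using f_inv_into_f[OF that] .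
  have ec: "e' a \<in> carrier M" if "a \<in> e ` carrier M" for a
    unfolding e'_def using inv_into_into[OF that] .
  have cM2: "carrier M2 = e ` carrier M" by (simp add: M2_def)
  have mM2: "a \<otimes>\<^bsub>M2\<^esub> b = e (e' a \<otimes>\<^bsub>M\<^esub> e' b)" for a b by (simp add: M2_def)
  have oM2: "\<one>\<^bsub>M2\<^esub> = e \<one>\<^bsub>M\<^esub>" by (simp add: M2_def)
  interpret M: group M by (rule gM)
  have gM2: "group M2"
  proof (rule groupI)
    fix x y assume "x \<in> carrier M2" "y \<in> carrier M2"
    then show "x \<otimes>\<^bsub>M2\<^esub> y \<in> carrier M2" unfolding cM2 mM2 using ec by simp
  next
    show "\<one>\<^bsub>M2\<^esub> \<in> carrier M2" unfolding cM2 oM2 by simp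
  next
    fix x y z assume xyz: "x \<in> carrier M2" "y \<in> carrier M2" "z \<in> carrier M2"
    then show "x \<otimes>\<^bsub>M2\<^esub> y \<otimes>\<^bsub>M2\<^esub> z = x \<otimes>\<^bsub>M2\<^esub> (y \<otimes>\<^bsub>M2\<^esub> z)"
      unfolding cM2 mM2 using ec by (simp add: ee M.m_assoc)
  next
    fix x assume "x \<in> carrier M2"
    then show "\<one>\<^bsub>M2\<^esub> \<otimes>\<^bsub>M2\<^esub> x = x" unfolding cM2 mM2 oM2 using ec ee2 by (simp add: ee)
  next
    fix x assume x: "x \<in> carrier M2"
    then have x': "x \<in> e ` carrier M" unfolding cM2 .
    have "e (inv\<^bsub>M\<^esub> (e' x)) \<in> carrier M2" unfolding cM2 using ec[OF x'] by simp
    moreover have "e (inv\<^bsub>M\<^esub> (e' x)) \<otimes>\<^bsub>M2\<^esub> x = \<one>\<^bsub>M2\<^esub>"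
      unfolding mM2 oM2 using ec[OF x'] by (simp add: ee)
    ultimately show "\<exists>y\<in>carrier M2. y \<otimes>\<^bsub>M2\<^esub> x = \<one>\<^bsub>M2\<^esub>" by blast
  qed
  have ehom: "e \<in> hom M M2"
  proof (rule homI)
    fix x assume "x \<in> carrier M" then show "e x \<in> carrier M2" unfolding cM2 by simp
  next
    fix x y assume "x \<in> carrier M" "y \<in> carrier M"
    then show "e (x \<otimes>\<^bsub>M\<^esub> y) = e x \<otimes>\<^bsub>M2\<^esub> e y" unfolding mM2 by (simp add: ee)
  qed
  have eiso: "e \<in> iso M M2"
    unfolding iso_def using ehom inj cM2 by (simp add: bij_betw_def)
  have e'iso: "e' \<in> iso M2 M" unfolding e'_def by (rule M.iso_set_sym[OF eiso])
  have e'hom: "e' \<in> hom M2 M" using e'iso by (simp add: iso_def)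
  have ghe: "group_hom M M2 e"
    unfolding group_hom_def group_hom_axioms_def using gM gM2 ehom by blast
  have topS2: "topspace S2 = e ` carrier M"
    unfolding S2_def by (rule ptop_topspace) (simp add: top)
  have qe: "quotient_map S S2 e"
    unfolding S2_def by (rule ptop_quotient_map) (simp add: top)
  have hm: "homeomorphic_map S S2 e"
    unfolding homeomorphic_map_def using qe inj top by simp
  have ecS: "continuous_map S S2 e" by (rule quotient_imp_continuous_map[OF qe])
  obtain g where g: "homeomorphic_maps S S2 e g" using hm homeomorphic_map_maps by blast
  have gc0: "continuous_map S2 S g" using g by (simp add: homeomorphic_maps_def)
  have e'cS: "continuous_map S2 S e'"
  proof (rule continuous_map_eq[OF gc0])
    fix a assume "a \<in> topspace S2"
    then obtain y where y: "y \<in> carrier M" "a = e y" unfolding topS2 by blast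
    have "g (e y) = y" using g y top by (simp add: homeomorphic_maps_def)
    then show "g a = e' a" using y ee by simp
  qed
  have hsp: "S homeomorphic_space S2" by (rule homeomorphic_map_imp_homeomorphic_space[OF hm])
  have Haus2: "Hausdorff_space S2" using homeomorphic_Hausdorff_space[OF hsp] Haus by simp
  have cpt2: "compact_space S2" using homeomorphic_compact_space[OF hsp] cpt by simp
  have mc2: "continuous_map (prod_topology S2 S2) S2 (\<lambda>(a, b). a \<otimes>\<^bsub>M2\<^esub> b)"
  proof -
    have c1: "continuous_map (prod_topology S2 S2) S (\<lambda>z. e' (fst z))"
      using continuous_map_compose[OF continuous_map_fst e'cS] by (simp add: o_def)
    have c2: "continuous_map (prod_topology S2 S2) S (\<lambda>z. e' (snd z))"
      using continuous_map_compose[OF continuous_map_snd e'cS] by (simp add: o_def)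
    have "continuous_map (prod_topology S2 S2) S (\<lambda>z. e' (fst z) \<otimes>\<^bsub>M\<^esub> e' (snd z))"
      by (rule tg_mult_cont[OF tg c1 c2])
    then have "continuous_map (prod_topology S2 S2) S2 (\<lambda>z. e (e' (fst z) \<otimes>\<^bsub>M\<^esub> e' (snd z)))"
      using continuous_map_compose[OF _ ecS] by (simp add: o_def)
    moreover have "(\<lambda>(a, b). a \<otimes>\<^bsub>M2\<^esub> b) = (\<lambda>z. e (e' (fst z) \<otimes>\<^bsub>M\<^esub> e' (snd z)))"
      by (simp add: fun_eq_iff split_def mM2)
    ultimately show ?thesis by simp
  qed
  have ic2: "continuous_map S2 S2 (\<lambda>a. inv\<^bsub>M2\<^esub> a)"
  proof -
    have "continuous_map S2 S (\<lambda>a. inv\<^bsub>M\<^esub> (e' a))" by (rule tg_inv_cont[OF tg e'cS])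
    then have c: "continuous_map S2 S2 (\<lambda>a. e (inv\<^bsub>M\<^esub> (e' a)))"
      using continuous_map_compose[OF _ ecS] by (simp add: o_def)
    show ?thesis
    proof (rule continuous_map_eq[OF c])
      fix a assume "a \<in> topspace S2"
      then have a: "a \<in> e ` carrier M" unfolding topS2 .
      have "e (inv\<^bsub>M\<^esub> (e' a)) = inv\<^bsub>M2\<^esub> (e (e' a))"
        by (rule group_hom.hom_inv[OF ghe ec[OF a]])
      then show "e (inv\<^bsub>M\<^esub> (e' a)) = inv\<^bsub>M2\<^esub> a" using ee2[OF a] by simp
    qed
  qed
  have cg2: "compact_group M2 S2"
    unfolding compact_group_def topological_group_def
    using gM2 topS2 cM2 mc2 ic2 Haus2 cpt2 by simp
  have ech: "cont_hom M S M2 S2 e" using ehom ecS by (simp add: cont_hom_def)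
  have e'ch: "cont_hom M2 S2 M S e'" using e'hom e'cS by (simp add: cont_hom_def)
  have ach: "cont_hom G T M S \<alpha>" by (rule gc_parts(2)[OF gc])
  have ch2: "cont_hom G T M2 S2 (\<lambda>x. e (\<alpha> x))" by (rule cont_hom_comp[OF ach ech])
  have asub: "\<alpha> ` carrier G \<subseteq> topspace S"
    using hom_carrier[OF gc_parts(8)[OF gc]] top by simp
  have "S2 closure_of ((\<lambda>x. e (\<alpha> x)) ` carrier G) = S2 closure_of (e ` (\<alpha> ` carrier G))"
    by (simp add: image_image)
  also have "\<dots> = e ` (S closure_of (\<alpha> ` carrier G))"
    by (rule homeomorphic_map_closure_of[OF hm asub])
  also have "\<dots> = topspace S2" using gc_parts(3)[OF gc] topS2 top by simp
  finally have dense: "S2 closure_of ((\<lambda>x. e (\<alpha> x)) ` carrier G) = topspace S2" .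
  have "group_compactification G T (\<lambda>x. e (\<alpha> x)) M2 S2"
    unfolding group_compactification_def using cg2 ch2 dense by simp
  then show ?thesis using e'ch ee by blast
qed


lemma gc_quot:
  assumes gc: "group_compactification A TA \<gamma> M S"
  shows "group_compactification A TA (\<lambda>a. comp_quot_map M S (\<gamma> a)) (comp_quot_group M S) (comp_quot_top M S)"
proof -
  have cg: "compact_group M S" by (rule gc_parts(1)[OF gc])
  have gM: "group M" by (rule gc_parts(4)[OF gc])
  have tg: "topological_group M S" by (rule gc_parts(7)[OF gc])
  have cgQ: "compact_group (comp_quot_group M S) (comp_quot_top M S)" by (rule group.cq_compact[OF gM cg])
  have qch: "cont_hom M S (comp_quot_group M S) (comp_quot_top M S) (comp_quot_map M S)"
    using group.cq_basic(5,6)[OF gM tg] by (simp add: cont_hom_def)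
  have ch: "cont_hom A TA (comp_quot_group M S) (comp_quot_top M S) (\<lambda>a. comp_quot_map M S (\<gamma> a))"
    by (rule cont_hom_comp[OF gc_parts(2)[OF gc] qch])
  have qm: "quotient_map S (comp_quot_top M S) (comp_quot_map M S)" by (rule group.cq_basic(4)[OF gM tg])
  have qc: "continuous_map S (comp_quot_top M S) (comp_quot_map M S)" by (rule group.cq_basic(5)[OF gM tg])
  have "topspace (comp_quot_top M S) = comp_quot_map M S ` topspace S"
    using qm by (simp add: quotient_map_def)
  also have "\<dots> = comp_quot_map M S ` (S closure_of (\<gamma> ` carrier A))" using gc_parts(3)[OF gc] by simp
  also have "\<dots> \<subseteq> comp_quot_top M S closure_of (comp_quot_map M S ` (\<gamma> ` carrier A))"
    by (rule continuous_map_image_closure_subset[OF qc])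
  also have "\<dots> = comp_quot_top M S closure_of ((\<lambda>a. comp_quot_map M S (\<gamma> a)) ` carrier A)"
    by (simp add: image_image)
  finally have "comp_quot_top M S closure_of ((\<lambda>a. comp_quot_map M S (\<gamma> a)) ` carrier A) = topspace (comp_quot_top M S)"
    using closure_of_subset_topspace by (metis subset_antisym)
  then show ?thesis unfolding group_compactification_def using cgQ ch by simp
qed

lemma gc_pre:
  assumes gc: "group_compactification A TA \<gamma> M S"
    and p: "cont_hom B TB A TA p" and ps: "p ` carrier B = carrier A"
  shows "group_compactification B TB (\<lambda>b. \<gamma> (p b)) M S"
proof -
  have "(\<lambda>b. \<gamma> (p b)) ` carrier B = \<gamma> ` carrier A" using ps by (simp add: image_image[symmetric])
  then show ?thesis
    using gc_parts(1,3)[OF gc] cont_hom_comp[OF p gc_parts(2)[OF gc]]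
    unfolding group_compactification_def by simp
qed


theorem proposition2p2:
  fixes G :: "('a, 'm) monoid_scheme" and TG :: "'a topology"
    and \<eta> :: "'a \<Rightarrow> 'b" and K :: "('b, 'n) monoid_scheme" and TK :: "'b topology"
    and \<zeta> :: "'a set \<Rightarrow> 'c" and L :: "('c, 'p) monoid_scheme" and TL :: "'c topology"
  assumes "locally_compact_group G TG"
    and "ap_compactification G TG \<eta> K TK"
    and "ap_compactification (comp_quot_group G TG) (comp_quot_top G TG) \<zeta> L TL"
  shows "\<exists>\<theta>. top_group_iso (comp_quot_group K TK) (comp_quot_top K TK)
                          (comp_quot_group L TL) (comp_quot_top L TL) \<theta> \<and>
             (\<forall>x \<in> carrier G. \<theta> (comp_quot_map K TK (\<eta> x)) =
                               comp_quot_map L TL (\<zeta> (comp_quot_map G TG x)))"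
proof -
  let ?Gq = "comp_quot_group G TG" and ?QG = "comp_quot_top G TG" and ?qG = "comp_quot_map G TG"
  let ?Kq = "comp_quot_group K TK" and ?QK = "comp_quot_top K TK" and ?qK = "comp_quot_map K TK"
  let ?Lq = "comp_quot_group L TL" and ?QL = "comp_quot_top L TL" and ?qL = "comp_quot_map L TL"
  have tgG: "topological_group G TG" using assms(1) by (simp add: locally_compact_group_def)
  have gG: "group G" by (rule tg_group[OF tgG])
  have gcK: "group_compactification G TG \<eta> K TK" using assms(2) by (simp add: ap_compactification_def)
  have gcL: "group_compactification ?Gq ?QG \<zeta> L TL" using assms(3) by (simp add: ap_compactification_def)
  have apK: "\<exists>\<phi>. cont_hom K TK L2 R \<phi> \<and> (\<forall>x \<in> carrier G. \<phi> (\<eta> x) = \<alpha> x)"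
    if "group_compactification G TG \<alpha> L2 R" for L2 :: "'a set set monoid" and R \<alpha>
    using assms(2) that unfolding ap_compactification_def by blast
  have apL: "\<exists>\<phi>. cont_hom L TL L2 R \<phi> \<and> (\<forall>x \<in> carrier ?Gq. \<phi> (\<zeta> x) = \<alpha> x)"
    if "group_compactification ?Gq ?QG \<alpha> L2 R" for L2 :: "'a set set set monoid" and R \<alpha>
    using assms(3) that unfolding ap_compactification_def by blast
  have gK: "group K" by (rule gc_parts(4)[OF gcK])
  have tgK: "topological_group K TK" by (rule gc_parts(7)[OF gcK])
  have gL: "group L" by (rule gc_parts(4)[OF gcL])
  have tgL: "topological_group L TL" by (rule gc_parts(7)[OF gcL])
  have cqK: "compact_group ?Kq ?QK" by (rule group.cq_compact[OF gK gc_parts(1)[OF gcK]])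
  have cqL: "compact_group ?Lq ?QL" by (rule group.cq_compact[OF gL gc_parts(1)[OF gcL]])
  have gKq: "group ?Kq" by (rule group.cq_basic(1)[OF gK tgK])
  have gLq: "group ?Lq" by (rule group.cq_basic(1)[OF gL tgL])
  have HausK: "Hausdorff_space ?QK" using cqK by (simp add: compact_group_def)
  have HausL: "Hausdorff_space ?QL" using cqL by (simp add: compact_group_def)
  have topQK: "topspace ?QK = carrier ?Kq" by (rule group.cq_basic(3)[OF gK tgK])
  have topQL: "topspace ?QL = carrier ?Lq" by (rule group.cq_basic(3)[OF gL tgL])
  have qGh: "cont_hom G TG ?Gq ?QG ?qG"
    using group.cq_basic(5,6)[OF gG tgG] by (simp add: cont_hom_def)
  have qKh: "cont_hom K TK ?Kq ?QK ?qK"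
    using group.cq_basic(5,6)[OF gK tgK] by (simp add: cont_hom_def)
  have qGsurj: "?qG ` carrier G = carrier ?Gq"
    using group.cq_basic(2,9)[OF gG tgG] rcosets_image[OF gG] by (simp add: group.cq_map_eq[OF gG])
  have \<eta>h: "\<eta> \<in> hom G K" by (rule gc_parts(8)[OF gcK])
  have \<zeta>h: "\<zeta> \<in> hom ?Gq L" by (rule gc_parts(8)[OF gcL])

  \<comment> \<open>The map G \<rightarrow> L/L_e and its lift \<phi>0 : K \<rightarrow> L/L_e\<close>
  have gc1: "group_compactification ?Gq ?QG (\<lambda>c. ?qL (\<zeta> c)) ?Lq ?QL" by (rule gc_quot[OF gcL])
  have gc2: "group_compactification G TG (\<lambda>x. ?qL (\<zeta> (?qG x))) ?Lq ?QL"
    by (rule gc_pre[OF gc1 qGh qGsurj])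
  obtain M2 :: "'a set set monoid" and S2 e' where
    c2: "group_compactification G TG (\<lambda>x. (\<lambda>m. {{g \<in> carrier G. ?qL (\<zeta> (?qG g)) \<in> U} | U. openin ?QL U \<and> m \<in> U}) (?qL (\<zeta> (?qG x)))) M2 S2"
      "cont_hom M2 S2 ?Lq ?QL e'"
      "\<forall>y \<in> carrier ?Lq. e' ((\<lambda>m. {{g \<in> carrier G. ?qL (\<zeta> (?qG g)) \<in> U} | U. openin ?QL U \<and> m \<in> U}) y) = y"
    using gc_copy[OF gc2 code_inj[OF gc2]] by blast
  obtain \<phi> where \<phi>: "cont_hom K TK M2 S2 \<phi>"
    "\<forall>x \<in> carrier G. \<phi> (\<eta> x) = (\<lambda>m. {{g \<in> carrier G. ?qL (\<zeta> (?qG g)) \<in> U} | U. openin ?QL U \<and> m \<in> U}) (?qL (\<zeta> (?qG x)))"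
    using apK[OF c2(1)] by blast
  define \<phi>0 where "\<phi>0 = (\<lambda>k. e' (\<phi> k))"
  have \<phi>0h: "cont_hom K TK ?Lq ?QL \<phi>0" unfolding \<phi>0_def by (rule cont_hom_comp[OF \<phi>(1) c2(2)])
  have \<phi>0\<eta>: "\<phi>0 (\<eta> x) = ?qL (\<zeta> (?qG x))" if x: "x \<in> carrier G" for x
  proof -
    have "?qL (\<zeta> (?qG x)) \<in> carrier ?Lq" using hom_in_carrier[OF gc_parts(8)[OF gc2] x] .
    then show ?thesis unfolding \<phi>0_def using \<phi>(2) x c2(3) by simp
  qed
  have \<phi>0kill: "\<forall>k \<in> identity_component K TK. \<phi>0 k = \<one>\<^bsub>?Lq\<^esub>"
  proof
    fix k assume k: "k \<in> identity_component K TK"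
    have c: "continuous_map TK ?QL \<phi>0" using \<phi>0h by (simp add: cont_hom_def)
    have "\<phi>0 \<one>\<^bsub>K\<^esub> = \<one>\<^bsub>?Lq\<^esub>" using hom_one[OF _ gK gLq] \<phi>0h by (simp add: cont_hom_def)
    then have "\<phi>0 \<one>\<^bsub>K\<^esub> = identity_component L TL" using group.cq_basic(7)[OF gL tgL] by simp
    from group.cq_kill[OF gL tgL c this] k
    have "\<phi>0 k = identity_component L TL" unfolding identity_component_def by blast
    then show "\<phi>0 k = \<one>\<^bsub>?Lq\<^esub>" using group.cq_basic(7)[OF gL tgL] by simp
  qed
  define \<phi>' where "\<phi>' = (\<lambda>C. \<phi>0 (SOME y. y \<in> C))"
  have \<phi>'h: "cont_hom ?Kq ?QK ?Lq ?QL \<phi>'"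
    unfolding \<phi>'_def by (rule group.cq_induced(1)[OF gK tgK \<phi>0h gLq \<phi>0kill])
  have \<phi>'q: "\<phi>' (?qK y) = \<phi>0 y" if "y \<in> carrier K" for y
    using group.cq_induced(2)[OF gK tgK \<phi>0h gLq \<phi>0kill] that unfolding \<phi>'_def by blast

  \<comment> \<open>The map G/G_e \<rightarrow> K/K_e and its lift \<psi>0 : L \<rightarrow> K/K_e\<close>
  have fh: "cont_hom G TG ?Kq ?QK (\<lambda>x. ?qK (\<eta> x))" by (rule cont_hom_comp[OF gc_parts(2)[OF gcK] qKh])
  have fkill: "\<forall>g \<in> identity_component G TG. ?qK (\<eta> g) = \<one>\<^bsub>?Kq\<^esub>"
  proof
    fix g assume g: "g \<in> identity_component G TG"
    have "\<eta> \<one>\<^bsub>G\<^esub> = \<one>\<^bsub>K\<^esub>" by (rule hom_one[OF \<eta>h gG gK])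
    from comp_image[OF gc_parts(9)[OF gcK] this] g
    have "\<eta> g \<in> identity_component K TK" unfolding identity_component_def by blast
    moreover have "\<eta> g \<in> carrier K"
      using g idc_sub[of G TG] tg_top[OF tgG] hom_in_carrier[OF \<eta>h] by blast
    ultimately have "?qK (\<eta> g) = identity_component K TK"
      using group.coset_join2[OF gK _ group.cq_basic(9)[OF gK tgK]] by (simp add: group.cq_map_eq[OF gK])
    then show "?qK (\<eta> g) = \<one>\<^bsub>?Kq\<^esub>" using group.cq_basic(7)[OF gK tgK] by simp
  qed
  define \<beta> where "\<beta> = (\<lambda>C. ?qK (\<eta> (SOME y. y \<in> C)))"
  have \<beta>h: "cont_hom ?Gq ?QG ?Kq ?QK \<beta>"
    unfolding \<beta>_def by (rule group.cq_induced(1)[OF gG tgG fh gKq fkill])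
  have \<beta>q: "\<beta> (?qG x) = ?qK (\<eta> x)" if "x \<in> carrier G" for x
    using group.cq_induced(2)[OF gG tgG fh gKq fkill] that unfolding \<beta>_def by blast
  have gcKq: "group_compactification G TG (\<lambda>x. ?qK (\<eta> x)) ?Kq ?QK" by (rule gc_quot[OF gcK])
  have \<beta>img: "\<beta> ` carrier ?Gq = (\<lambda>x. ?qK (\<eta> x)) ` carrier G"
  proof -
    have "\<beta> ` carrier ?Gq = \<beta> ` ?qG ` carrier G" using qGsurj by simp
    also have "\<dots> = (\<lambda>x. ?qK (\<eta> x)) ` carrier G" using \<beta>q by (simp add: image_image)
    finally show ?thesis .
  qed
  have gc3: "group_compactification ?Gq ?QG \<beta> ?Kq ?QK"
    unfolding group_compactification_def using cqK \<beta>h gc_parts(3)[OF gcKq] \<beta>img by simp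
  obtain M3 :: "'a set set set monoid" and S3 e3 where
    c3: "group_compactification ?Gq ?QG (\<lambda>x. (\<lambda>m. {{g \<in> carrier ?Gq. \<beta> g \<in> U} | U. openin ?QK U \<and> m \<in> U}) (\<beta> x)) M3 S3"
      "cont_hom M3 S3 ?Kq ?QK e3"
      "\<forall>y \<in> carrier ?Kq. e3 ((\<lambda>m. {{g \<in> carrier ?Gq. \<beta> g \<in> U} | U. openin ?QK U \<and> m \<in> U}) y) = y"
    using gc_copy[OF gc3 code_inj[OF gc3]] by blast
  obtain \<psi> where \<psi>: "cont_hom L TL M3 S3 \<psi>"
    "\<forall>x \<in> carrier ?Gq. \<psi> (\<zeta> x) = (\<lambda>m. {{g \<in> carrier ?Gq. \<beta> g \<in> U} | U. openin ?QK U \<and> m \<in> U}) (\<beta> x)"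
    using apL[OF c3(1)] by blast
  define \<psi>0 where "\<psi>0 = (\<lambda>k. e3 (\<psi> k))"
  have \<psi>0h: "cont_hom L TL ?Kq ?QK \<psi>0" unfolding \<psi>0_def by (rule cont_hom_comp[OF \<psi>(1) c3(2)])
  have \<psi>0\<zeta>: "\<psi>0 (\<zeta> c) = \<beta> c" if c: "c \<in> carrier ?Gq" for c
  proof -
    have "\<beta> c \<in> carrier ?Kq" using hom_in_carrier[OF gc_parts(8)[OF gc3] c] .
    then show ?thesis unfolding \<psi>0_def using \<psi>(2) c c3(3) by simp
  qed
  have \<psi>0kill: "\<forall>k \<in> identity_component L TL. \<psi>0 k = \<one>\<^bsub>?Kq\<^esub>"
  proof
    fix k assume k: "k \<in> identity_component L TL"
    have c: "continuous_map TL ?QK \<psi>0" using \<psi>0h by (simp add: cont_hom_def)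
    have "\<psi>0 \<one>\<^bsub>L\<^esub> = \<one>\<^bsub>?Kq\<^esub>" using hom_one[OF _ gL gKq] \<psi>0h by (simp add: cont_hom_def)
    then have "\<psi>0 \<one>\<^bsub>L\<^esub> = identity_component K TK" using group.cq_basic(7)[OF gK tgK] by simp
    from group.cq_kill[OF gK tgK c this] k
    have "\<psi>0 k = identity_component K TK" unfolding identity_component_def by blast
    then show "\<psi>0 k = \<one>\<^bsub>?Kq\<^esub>" using group.cq_basic(7)[OF gK tgK] by simp
  qed
  define \<psi>' where "\<psi>' = (\<lambda>C. \<psi>0 (SOME y. y \<in> C))"
  have \<psi>'h: "cont_hom ?Lq ?QL ?Kq ?QK \<psi>'"
    unfolding \<psi>'_def by (rule group.cq_induced(1)[OF gL tgL \<psi>0h gKq \<psi>0kill])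
  have \<psi>'q: "\<psi>' (?qL y) = \<psi>0 y" if "y \<in> carrier L" for y
    using group.cq_induced(2)[OF gL tgL \<psi>0h gKq \<psi>0kill] that unfolding \<psi>'_def by blast

  have \<phi>'c: "continuous_map ?QK ?QL \<phi>'" using \<phi>'h by (simp add: cont_hom_def)
  have \<psi>'c: "continuous_map ?QL ?QK \<psi>'" using \<psi>'h by (simp add: cont_hom_def)
  have inv1: "\<psi>' (\<phi>' C) = C" if C: "C \<in> topspace ?QK" for C
  proof (rule forall_in_closure_of_eq[where f = "\<lambda>C. \<psi>' (\<phi>' C)" and g = "\<lambda>C. C"])
    show "C \<in> ?QK closure_of ((\<lambda>x. ?qK (\<eta> x)) ` carrier G)" using gc_parts(3)[OF gcKq] C by simp
    show "Hausdorff_space ?QK" by (rule HausK)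
    show "continuous_map ?QK ?QK (\<lambda>C. \<psi>' (\<phi>' C))"
      using continuous_map_compose[OF \<phi>'c \<psi>'c] by (simp add: o_def)
    show "continuous_map ?QK ?QK (\<lambda>C. C)" by (rule continuous_map_id[unfolded id_def])
  next
    fix D assume "D \<in> (\<lambda>x. ?qK (\<eta> x)) ` carrier G"
    then obtain x where x: "x \<in> carrier G" "D = ?qK (\<eta> x)" by blast
    have \<eta>x: "\<eta> x \<in> carrier K" by (rule hom_in_carrier[OF \<eta>h x(1)])
    have qx: "?qG x \<in> carrier ?Gq" using qGsurj x(1) by blast
    have \<zeta>x: "\<zeta> (?qG x) \<in> carrier L" by (rule hom_in_carrier[OF \<zeta>h qx])
    have "\<psi>' (\<phi>' D) = \<psi>' (?qL (\<zeta> (?qG x)))" using x \<phi>'q[OF \<eta>x] \<phi>0\<eta>[OF x(1)] by simp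
    also have "\<dots> = \<psi>0 (\<zeta> (?qG x))" by (rule \<psi>'q[OF \<zeta>x])
    also have "\<dots> = \<beta> (?qG x)" by (rule \<psi>0\<zeta>[OF qx])
    also have "\<dots> = D" using \<beta>q[OF x(1)] x(2) by simp
    finally show "\<psi>' (\<phi>' D) = D" .
  qed
  have inv2: "\<phi>' (\<psi>' D) = D" if D: "D \<in> topspace ?QL" for D
  proof (rule forall_in_closure_of_eq[where f = "\<lambda>C. \<phi>' (\<psi>' C)" and g = "\<lambda>C. C"])
    show "D \<in> ?QL closure_of ((\<lambda>c. ?qL (\<zeta> c)) ` carrier ?Gq)" using gc_parts(3)[OF gc1] D by simp
    show "Hausdorff_space ?QL" by (rule HausL)
    show "continuous_map ?QL ?QL (\<lambda>C. \<phi>' (\<psi>' C))"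
      using continuous_map_compose[OF \<psi>'c \<phi>'c] by (simp add: o_def)
    show "continuous_map ?QL ?QL (\<lambda>C. C)" by (rule continuous_map_id[unfolded id_def])
  next
    fix E assume "E \<in> (\<lambda>c. ?qL (\<zeta> c)) ` carrier ?Gq"
    then obtain c where c: "c \<in> carrier ?Gq" "E = ?qL (\<zeta> c)" by blast
    obtain x where x: "x \<in> carrier G" "c = ?qG x" using c(1) qGsurj by blast
    have \<eta>x: "\<eta> x \<in> carrier K" by (rule hom_in_carrier[OF \<eta>h x(1)])
    have \<zeta>c: "\<zeta> c \<in> carrier L" by (rule hom_in_carrier[OF \<zeta>h c(1)])
    have "\<phi>' (\<psi>' E) = \<phi>' (\<psi>0 (\<zeta> c))" using c(2) \<psi>'q[OF \<zeta>c] by simp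
    also have "\<dots> = \<phi>' (\<beta> c)" using \<psi>0\<zeta>[OF c(1)] by simp
    also have "\<dots> = \<phi>' (?qK (\<eta> x))" using \<beta>q[OF x(1)] x(2) by simp
    also have "\<dots> = \<phi>0 (\<eta> x)" by (rule \<phi>'q[OF \<eta>x])
    also have "\<dots> = E" using \<phi>0\<eta>[OF x(1)] x(2) c(2) by simp
    finally show "\<phi>' (\<psi>' E) = E" .
  qed
  have hms: "homeomorphic_maps ?QK ?QL \<phi>' \<psi>'"
    unfolding homeomorphic_maps_def using \<phi>'c \<psi>'c inv1 inv2 by blast
  have \<phi>'hom: "\<phi>' \<in> hom ?Kq ?Lq" using \<phi>'h by (simp add: cont_hom_def)
  have bij: "bij_betw \<phi>' (carrier ?Kq) (carrier ?Lq)"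
  proof (rule bij_betw_byWitness[where f' = \<psi>'])
    show "\<forall>a \<in> carrier ?Kq. \<psi>' (\<phi>' a) = a" using inv1 topQK by simp
    show "\<forall>a \<in> carrier ?Lq. \<phi>' (\<psi>' a) = a" using inv2 topQL by simp
    show "\<phi>' ` carrier ?Kq \<subseteq> carrier ?Lq" by (rule hom_carrier[OF \<phi>'hom])
    have "\<psi>' \<in> hom ?Lq ?Kq" using \<psi>'h by (simp add: cont_hom_def)
    then show "\<psi>' ` carrier ?Lq \<subseteq> carrier ?Kq" by (rule hom_carrier)
  qed
  have "top_group_iso ?Kq ?QK ?Lq ?QL \<phi>'"
    unfolding top_group_iso_def iso_def using \<phi>'hom bij homeomorphic_maps_imp_map[OF hms] by simp
  moreover have "\<forall>x \<in> carrier G. \<phi>' (?qK (\<eta> x)) = ?qL (\<zeta> (?qG x))"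
    using \<phi>'q \<phi>0\<eta> hom_in_carrier[OF \<eta>h] by simp
  ultimately show ?thesis by blast
qed

end
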